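(* Let $\mathcal{G}$ be a group prevariety over a finite alphabet $A$, let $\alpha:A^*\to M$ be a surjective morphism into a finite monoid, and let $N$ be the $\mathcal{G}$-kernel of $\alpha$. Then: (1) every $\mathcal{G}$-orbit for $\alpha$ is a subset of $N$; (2) $N$ is exactly the $\mathcal{G}$-orbit of $1_M$ for $\alpha$.
   Context: Fix a finite alphabet $A$. A prevariety is a class of regular languages over $A$ containing $\emptyset$ and $A^*$, closed under union, intersection, complement, and under the quotients $u^{-1}L=\{w\mid uw\in L\}$ and $Lu^{-1}=\{w\mid wu\in L\}$; a group prevariety is a prevariety all of whose languages are recognized by morphisms into finite groups. $L_1$ is $\mathcal{G}$-separable from $L_2$ if some $K\in\mathcal{G}$ satisfies $L_1\subseteq K$, $K\cap L_2=\emptyset$. For $\alpha:A^*\to M$: $(s,t)\in M^2$ is a $\mathcal{G}$-pair if $\alpha^{-1}(s)$ is not $\mathcal{G}$-separable from $\alpha^{-1}(t)$; for an idempotent $e\in M$, the $\mathcal{G}$-orbit of $e$ is $\{ese\mid (e,s)\text{ is a }\mathcal{G}\text{-pair}\}$; the $\mathcal{G}$-orbits for $\alpha$ are the $\mathcal{G}$-orbits of the idempotents of $M$; the $\mathcal{G}$-kernel of $\alpha$ is the set of $s\in M$ such that $\{\varepsilon\}$ is not $\mathcal{G}$-separable from $\alpha^{-1}(s)$. *)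

theory Defs
  imports "HOL-Algebra.Group"
begin

text \<open>Words over a finite alphabet: the alphabet A is the (finite) type 'a,
  words are lists, languages are sets of lists.\<close>

definition regular :: "'a list set \<Rightarrow> bool" where
  "regular L \<longleftrightarrow> (\<exists>(Q::nat set) \<delta> q0 F. finite Q \<and> q0 \<in> Q \<and>
      (\<forall>q\<in>Q. \<forall>a. \<delta> q a \<in> Q) \<and> F \<subseteq> Q \<and> L = {w. foldl \<delta> q0 w \<in> F})"

definition lquot :: "'a list \<Rightarrow> 'a list set \<Rightarrow> 'a list set" where
  "lquot u L = {w. u @ w \<in> L}"

definition rquot :: "'a list set \<Rightarrow> 'a list \<Rightarrow> 'a list set" where
  "rquot L u = {w. w @ u \<in> L}"

definition prevariety :: "'a list set set \<Rightarrow> bool" where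
  "prevariety C \<longleftrightarrow> (\<forall>L\<in>C. regular L) \<and> {} \<in> C \<and> UNIV \<in> C \<and>
     (\<forall>K\<in>C. \<forall>L\<in>C. K \<union> L \<in> C \<and> K \<inter> L \<in> C) \<and>
     (\<forall>L\<in>C. - L \<in> C) \<and>
     (\<forall>L\<in>C. \<forall>u. lquot u L \<in> C \<and> rquot L u \<in> C)"

definition word_morphism :: "('a list \<Rightarrow> 'm) \<Rightarrow> ('m, 'b) monoid_scheme \<Rightarrow> bool" where
  "word_morphism h M \<longleftrightarrow> (\<forall>w. h w \<in> carrier M) \<and> h [] = \<one>\<^bsub>M\<^esub> \<and>
     (\<forall>u v. h (u @ v) = h u \<otimes>\<^bsub>M\<^esub> h v)"

text \<open>L is recognized by a morphism into a finite group (carriers on nat suffice,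
  since every finite group is isomorphic to one with carrier a set of naturals).\<close>
definition group_recognizable :: "'a list set \<Rightarrow> bool" where
  "group_recognizable L \<longleftrightarrow> (\<exists>(G::nat monoid) h F. group G \<and> finite (carrier G) \<and>
      word_morphism h G \<and> F \<subseteq> carrier G \<and> L = h -` F)"

definition group_prevariety :: "'a list set set \<Rightarrow> bool" where
  "group_prevariety C \<longleftrightarrow> prevariety C \<and> (\<forall>L\<in>C. group_recognizable L)"

definition separable :: "'a list set set \<Rightarrow> 'a list set \<Rightarrow> 'a list set \<Rightarrow> bool" where
  "separable C L1 L2 \<longleftrightarrow> (\<exists>K\<in>C. L1 \<subseteq> K \<and> K \<inter> L2 = {})"

definition C_pair :: "'a list set set \<Rightarrow> ('a list \<Rightarrow> 'm) \<Rightarrow> 'm \<Rightarrow> 'm \<Rightarrow> bool" where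
  "C_pair C \<alpha> s t \<longleftrightarrow> \<not> separable C (\<alpha> -` {s}) (\<alpha> -` {t})"

definition idempotent_el :: "('m, 'b) monoid_scheme \<Rightarrow> 'm \<Rightarrow> bool" where
  "idempotent_el M e \<longleftrightarrow> e \<in> carrier M \<and> e \<otimes>\<^bsub>M\<^esub> e = e"

definition C_orbit :: "'a list set set \<Rightarrow> ('a list \<Rightarrow> 'm) \<Rightarrow> ('m, 'b) monoid_scheme \<Rightarrow> 'm \<Rightarrow> 'm set" where
  "C_orbit C \<alpha> M e = {e \<otimes>\<^bsub>M\<^esub> s \<otimes>\<^bsub>M\<^esub> e | s. s \<in> carrier M \<and> C_pair C \<alpha> e s}"

definition C_kernel :: "'a list set set \<Rightarrow> ('a list \<Rightarrow> 'm) \<Rightarrow> ('m, 'b) monoid_scheme \<Rightarrow> 'm set" where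
  "C_kernel C \<alpha> M = {s \<in> carrier M. \<not> separable C {[]} (\<alpha> -` {s})}"

end

theory Submission
  imports Defs "HOL-Algebra.Multiplicative_Group"
begin

definition simK :: "'a list set \<Rightarrow> 'a list \<Rightarrow> 'a list \<Rightarrow> bool" where
  "simK K w x \<longleftrightarrow> (\<forall>u v. u @ w @ v \<in> K \<longleftrightarrow> u @ x @ v \<in> K)"

definition satf :: "('a list \<Rightarrow> 'g) \<Rightarrow> 'a list set set" where
  "satf h = {L. \<forall>w w'. h w = h w' \<longrightarrow> (w \<in> L \<longleftrightarrow> w' \<in> L)}"

definition pw :: "'a list \<Rightarrow> nat \<Rightarrow> 'a list" where
  "pw y k = concat (replicate k y)"

lemma fin_family:
  assumes "prevariety C" "finite S" "S \<subseteq> C"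
  shows "\<Inter>S \<in> C \<and> \<Union>S \<in> C"
  using assms(2,3)
proof (induction S rule: finite_induct)
  case empty then show ?case using assms(1) by (simp add: prevariety_def)
next
  case (insert x F)
  then show ?case using assms(1) unfolding prevariety_def by auto
qed

lemma satf_finite:
  assumes "\<And>w. h w \<in> X0" "finite X0"
  shows "finite (satf h)"
proof -
  have "satf h \<subseteq> (\<lambda>X. h -` X) ` Pow X0"
  proof
    fix L assume L: "L \<in> satf h"
    have Ls: "\<And>w w'. h w = h w' \<Longrightarrow> w \<in> L \<Longrightarrow> w' \<in> L" using L unfolding satf_def by blast
    have "L = h -` (h ` L)"
    proof
      show "L \<subseteq> h -` (h ` L)" by blast
      show "h -` (h ` L) \<subseteq> L"
      proof
        fix w assume "w \<in> h -` (h ` L)"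
        then obtain w' where "w' \<in> L" "h w' = h w" by force
        then show "w \<in> L" using Ls by blast
      qed
    qed
    moreover have "h ` L \<in> Pow X0" using assms(1) by auto
    ultimately show "L \<in> (\<lambda>X. h -` X) ` Pow X0" by blast
  qed
  moreover have "finite ((\<lambda>X. h -` X) ` Pow X0)" using assms(2) by simp
  ultimately show ?thesis using finite_subset by blast
qed

lemma main:
  fixes C :: "('a::finite) list set set"
    and M :: "('m, 'b) monoid_scheme"
    and \<alpha> :: "'a list \<Rightarrow> 'm"
  assumes gp: "group_prevariety C"
    and mM: "monoid M"
    and wm: "word_morphism \<alpha> M" and surj: "\<alpha> ` UNIV = carrier M"
    and e: "idempotent_el M e" and s: "s \<in> carrier M" and pr: "C_pair C \<alpha> e s"
  shows "\<not> separable C {[]} (\<alpha> -` {e \<otimes>\<^bsub>M\<^esub> s \<otimes>\<^bsub>M\<^esub> e})"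
proof
  assume "separable C {[]} (\<alpha> -` {e \<otimes>\<^bsub>M\<^esub> s \<otimes>\<^bsub>M\<^esub> e})"
  then obtain K where KC: "K \<in> C" and eK: "[] \<in> K"
    and Kd: "K \<inter> \<alpha> -` {e \<otimes>\<^bsub>M\<^esub> s \<otimes>\<^bsub>M\<^esub> e} = {}"
    unfolding separable_def by auto
  have pv: "prevariety C" using gp by (simp add: group_prevariety_def)
  have "group_recognizable K" using gp KC by (simp add: group_prevariety_def)
  then obtain G :: "nat monoid" and h F where gG: "group G" and fG: "finite (carrier G)"
    and wh: "word_morphism h G" and KF: "K = h -` F"
    unfolding group_recognizable_def by blast
  interpret G: group G by (rule gG)
  interpret M: monoid M by (rule mM)
  have hc: "\<And>w. h w \<in> carrier G" and h0: "h [] = \<one>\<^bsub>G\<^esub>"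
    and happ: "\<And>u v. h (u @ v) = h u \<otimes>\<^bsub>G\<^esub> h v" using wh by (auto simp: word_morphism_def)
  have ac: "\<And>w. \<alpha> w \<in> carrier M" and aapp: "\<And>u v. \<alpha> (u @ v) = \<alpha> u \<otimes>\<^bsub>M\<^esub> \<alpha> v"
    using wm by (auto simp: word_morphism_def)
  have ec: "e \<in> carrier M" and ee: "e \<otimes>\<^bsub>M\<^esub> e = e" using e by (auto simp: idempotent_el_def)
  have h3: "\<And>u w v. h (u @ w @ v) = h u \<otimes>\<^bsub>G\<^esub> (h w \<otimes>\<^bsub>G\<^esub> h v)" by (simp add: happ)
  have simh: "\<And>w w'. h w = h w' \<Longrightarrow> simK K w w'"
    unfolding simK_def KF using h3 by simp
  have simtrans: "\<And>a b c. simK K a b \<Longrightarrow> simK K b c \<Longrightarrow> simK K a c"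
    unfolding simK_def by blast
  have simsym: "\<And>a b. simK K a b \<Longrightarrow> simK K b a"
    unfolding simK_def by blast
  have Ksat: "K \<in> satf h" unfolding satf_def KF by auto
  have finS: "finite (satf h)" using satf_finite[of h "carrier G"] hc fG by blast
  define Q where "Q y u v = (if u @ y @ v \<in> K then rquot (lquot u K) v else - rquot (lquot u K) v)"
    for y u v
  have QC: "Q y u v \<in> C" for y u v
    using pv KC unfolding Q_def prevariety_def by auto
  have Qs: "Q y u v \<in> satf h" for y u v
    unfolding Q_def satf_def rquot_def lquot_def KF using h3 by auto
  define cls where "cls y = {w. simK K w y}" for y
  have cls_eq: "cls y = \<Inter> {Q y u v | u v. True}" for y
    unfolding cls_def Q_def simK_def rquot_def lquot_def by auto
  have clsC: "cls y \<in> C" for y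
  proof -
    have "{Q y u v | u v. True} \<subseteq> satf h" using Qs by auto
    then have "finite {Q y u v | u v. True}" using finS finite_subset by blast
    then show ?thesis unfolding cls_eq using fin_family[OF pv] QC by blast
  qed
  have clsS: "cls y \<in> satf h" for y
    unfolding satf_def cls_def using simh simtrans simsym by blast
  define S where "S = \<Union> {cls y | y. \<alpha> y = e}"
  have SC: "S \<in> C"
  proof -
    have "{cls y | y. \<alpha> y = e} \<subseteq> satf h" using clsS by auto
    then have "finite {cls y | y. \<alpha> y = e}" using finS finite_subset by blast
    then show ?thesis unfolding S_def using fin_family[OF pv] clsC by blast
  qed
  have S1: "\<alpha> -` {e} \<subseteq> S"
  proof
    fix w assume "w \<in> \<alpha> -` {e}"
    then have "w \<in> cls w" "\<alpha> w = e" unfolding cls_def simK_def by auto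
    then show "w \<in> S" unfolding S_def by blast
  qed
  have hpw: "h (pw y k) = h y [^]\<^bsub>G\<^esub> k" for y k
  proof (induction k)
    case 0 then show ?case by (simp add: pw_def h0)
  next
    case (Suc k)
    have "h (pw y (Suc k)) = h y \<otimes>\<^bsub>G\<^esub> h (pw y k)" by (simp add: pw_def happ)
    then show ?case using Suc G.nat_pow_Suc2[OF hc] by simp
  qed
  have apw: "\<alpha> y = e \<Longrightarrow> \<alpha> (pw y (Suc k)) = e" for y k
    by (induction k) (simp_all add: pw_def aapp ec ee)
  have pwadd: "pw y a @ pw y b = pw y (a + b)" for y a b
    by (simp add: pw_def replicate_add)
  define m where "m = 2 * order G"
  have og: "order G \<ge> 1" using G.order_gt_0_iff_finite fG by simp
  have hm: "h y [^]\<^bsub>G\<^esub> m = \<one>\<^bsub>G\<^esub>" for y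
  proof -
    have "h y [^]\<^bsub>G\<^esub> m = (h y [^]\<^bsub>G\<^esub> order G) [^]\<^bsub>G\<^esub> (2::nat)"
      unfolding m_def using G.nat_pow_pow[OF hc] by (simp add: mult.commute)
    then show ?thesis using G.pow_order_eq_1[OF hc] by simp
  qed
  have S2: "S \<inter> \<alpha> -` {s} = {}"
  proof (rule ccontr)
    assume "S \<inter> \<alpha> -` {s} \<noteq> {}"
    then obtain w y where ws: "\<alpha> w = s" and ye: "\<alpha> y = e" and wy: "simK K w y"
      unfolding S_def cls_def by auto
    define k where "k = m - 1"
    have k1: "k \<ge> 1" and km: "Suc k = m" using og unfolding k_def m_def by auto
    define z where "z = pw y k @ w @ pw y (Suc k)"
    have "pw y k @ y @ pw y (Suc k) = pw y (m + m)"
    proof -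
      have "replicate (k + Suc (Suc k)) y = replicate k y @ replicate (Suc (Suc k)) y"
        by (rule replicate_add)
      moreover have "m + m = k + Suc (Suc k)" using km by simp
      ultimately show ?thesis unfolding pw_def by (simp del: replicate.simps add: replicate_Suc)
    qed
    moreover have "h (pw y (m + m)) = h []"
      unfolding hpw h0 using G.nat_pow_mult[OF hc, of y m m, symmetric] hm[of y] by simp
    ultimately have "simK K (pw y k @ y @ pw y (Suc k)) []" using simh by metis
    then have "pw y k @ y @ pw y (Suc k) \<in> K" using eK unfolding simK_def
      by (metis append_Nil append_Nil2)
    then have zK: "z \<in> K" using wy unfolding z_def simK_def by (metis append_assoc)
    have "\<alpha> (pw y k) = e" using apw[OF ye, of "k - 1"] k1 by simp
    then have "\<alpha> z = e \<otimes>\<^bsub>M\<^esub> s \<otimes>\<^bsub>M\<^esub> e"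
      unfolding z_def using aapp apw[OF ye, of k] ws M.m_assoc ec s by simp
    then show False using zK Kd by auto
  qed
  have "separable C (\<alpha> -` {e}) (\<alpha> -` {s})"
    unfolding separable_def using SC S1 S2 by blast
  then show False using pr unfolding C_pair_def by simp
qed

theorem lemma5p10:
  fixes C :: "('a::finite) list set set"
    and M :: "('m, 'b) monoid_scheme"
    and \<alpha> :: "'a list \<Rightarrow> 'm"
  assumes "group_prevariety C"
    and "monoid M" and "finite (carrier M)"
    and "word_morphism \<alpha> M" and "\<alpha> ` UNIV = carrier M"
  shows "(\<forall>e. idempotent_el M e \<longrightarrow> C_orbit C \<alpha> M e \<subseteq> C_kernel C \<alpha> M)
         \<and> C_kernel C \<alpha> M = C_orbit C \<alpha> M \<one>\<^bsub>M\<^esub>"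
proof -
  interpret M: monoid M by (rule assms(2))
  have P1: "C_orbit C \<alpha> M e \<subseteq> C_kernel C \<alpha> M" if e: "idempotent_el M e" for e
  proof
    fix t assume "t \<in> C_orbit C \<alpha> M e"
    then obtain s where t: "t = e \<otimes>\<^bsub>M\<^esub> s \<otimes>\<^bsub>M\<^esub> e" and s: "s \<in> carrier M"
      and p: "C_pair C \<alpha> e s" unfolding C_orbit_def by auto
    have "e \<in> carrier M" using e by (simp add: idempotent_el_def)
    then have "t \<in> carrier M" using t s by simp
    then show "t \<in> C_kernel C \<alpha> M" unfolding C_kernel_def t
      using main[OF assms(1,2,4,5) e s p] t by simp
  qed
  have i1: "idempotent_el M \<one>\<^bsub>M\<^esub>" by (simp add: idempotent_el_def)
  have h0: "\<alpha> [] = \<one>\<^bsub>M\<^esub>" using assms(4) by (simp add: word_morphism_def)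
  have "C_kernel C \<alpha> M \<subseteq> C_orbit C \<alpha> M \<one>\<^bsub>M\<^esub>"
  proof
    fix s assume "s \<in> C_kernel C \<alpha> M"
    then have s: "s \<in> carrier M" and ns: "\<not> separable C {[]} (\<alpha> -` {s})"
      unfolding C_kernel_def by auto
    have "C_pair C \<alpha> \<one>\<^bsub>M\<^esub> s"
      unfolding C_pair_def
    proof
      assume "separable C (\<alpha> -` {\<one>\<^bsub>M\<^esub>}) (\<alpha> -` {s})"
      then obtain K where "K \<in> C" "\<alpha> -` {\<one>\<^bsub>M\<^esub>} \<subseteq> K" "K \<inter> \<alpha> -` {s} = {}"
        unfolding separable_def by blast
      moreover have "[] \<in> \<alpha> -` {\<one>\<^bsub>M\<^esub>}" using h0 by simp
      ultimately have "separable C {[]} (\<alpha> -` {s})" unfolding separable_def by blast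
      then show False using ns by simp
    qed
    moreover have "s = \<one>\<^bsub>M\<^esub> \<otimes>\<^bsub>M\<^esub> s \<otimes>\<^bsub>M\<^esub> \<one>\<^bsub>M\<^esub>" using s by simp
    ultimately show "s \<in> C_orbit C \<alpha> M \<one>\<^bsub>M\<^esub>" unfolding C_orbit_def using s by blast
  qed
  moreover have "C_orbit C \<alpha> M \<one>\<^bsub>M\<^esub> \<subseteq> C_kernel C \<alpha> M" by (rule P1[OF i1])
  ultimately have "C_kernel C \<alpha> M = C_orbit C \<alpha> M \<one>\<^bsub>M\<^esub>" by (rule equalityI)
  moreover have "\<forall>e. idempotent_el M e \<longrightarrow> C_orbit C \<alpha> M e \<subseteq> C_kernel C \<alpha> M"
    using P1 by blast
  ultimately show ?thesis by blast
qed

end
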